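(* Let $n\ge1$ and $s\ge1$ be integers and let $\mathcal{E}$ be a nonempty subset of $\{1,\dots,s\}$ (the parity-check equation of an $(n,n-1)$ convolutional code), represented by the binary vector $b_1\dots b_s$ with $b_i=1$ iff $i\in\mathcal{E}$. For a finite set $\mathcal{F}$ of integers write $\tilde{\mathcal{G}}^{\mathcal{F}}_2$ for the labelled neighbourhood graph at distance two of $\mathcal{F}$ (defined in the context). Then: (1) if $\mathcal{E}'$ is the set represented by the reversed vector $b_s\dots b_1$ (i.e. $\mathcal{E}'=\{s+1-e: e\in\mathcal{E}\}$), the labelled graphs $\tilde{\mathcal{G}}^{\mathcal{E}'}_2$ and $\tilde{\mathcal{G}}^{\mathcal{E}}_2$ are equivalent; (2) if moreover $s$ is a multiple of $n$, then for every permutation $p$ of $\{1,\dots,n\}$, if $\mathcal{E}'$ is the set represented by the vector $p(b_1\dots b_n)\,p(b_{n+1}\dots b_{2n})\cdots p(b_{s-n+1}\dots b_s)$, obtained by applying the same permutation $p$ to the coordinates inside each consecutive block of length $n$, then $\tilde{\mathcal{G}}^{\mathcal{E}'}_2$ and $\tilde{\mathcal{G}}^{\mathcal{E}}_2$ are equivalent.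
   Context: For a finite set $\mathcal{F}$ of integers and $i\in\mathbb{Z}$ let $\mathcal{F}^{(i)}=\{f+in: f\in\mathcal{F}\}$. The labelled graph of a set $\mathcal{L}$ of such sets has one vertex per element of $\mathcal{L}$, and for two distinct elements $\mathcal{A},\mathcal{B}$ and each position $p\in\mathcal{A}\cap\mathcal{B}$ there is an edge between them labelled $p$. Take $\mathcal{L}=\{\mathcal{F}^{(i)}:i\in\mathbb{Z}\}$; let $V_1$ be the vertices $\mathcal{F}^{(i)}$ with $\mathcal{F}^{(i)}\cap\mathcal{F}\neq\emptyset$ (including $\mathcal{F}$), and let $\tilde{\mathcal{G}}^{\mathcal{F}}_2$ be the labelled subgraph induced by $V_1$ together with all vertices having an edge to a vertex of $V_1$. Two graphs are isomorphic if there is a bijection $\phi$ between their vertex sets such that every pair $(x,y)$ has as many edges between $x,y$ as between $\phi(x),\phi(y)$. Two labelled graphs are equivalent if they are isomorphic via some $\phi$ and there is a bijection $\psi$ from the labels of the first to the labels of the second such that for every pair of vertices $(x,y)$, if the multiset of labels of edges between $x$ and $y$ is $\{a_1,\dots,a_k\}$, then the multiset of labels of edges between $\phi(x)$ and $\phi(y)$ is $\{\psi(a_1),\dots,\psi(a_k)\}$. *)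

theory Defs
  imports Main "HOL-Library.Multiset" "HOL-Combinatorics.Permutations"
begin

definition shiftF :: "int \<Rightarrow> int set \<Rightarrow> int \<Rightarrow> int set" where
  "shiftF n F i = (\<lambda>f. f + i * n) ` F"

definition Lfam :: "int \<Rightarrow> int set \<Rightarrow> int set set" where
  "Lfam n F = range (shiftF n F)"

definition V1 :: "int \<Rightarrow> int set \<Rightarrow> int set set" where
  "V1 n F = {A \<in> Lfam n F. A \<inter> F \<noteq> {}}"

definition G2_verts :: "int \<Rightarrow> int set \<Rightarrow> int set set" where
  "G2_verts n F = V1 n F \<union> {B \<in> Lfam n F. \<exists>A \<in> V1 n F. A \<noteq> B \<and> A \<inter> B \<noteq> {}}"

definition int_edges :: "int set \<Rightarrow> int set \<Rightarrow> int multiset" where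
  "int_edges A B = (if A = B then {#} else mset_set (A \<inter> B))"

text \<open>A labelled (multi)graph is given by a vertex set V and a function E assigning to each
  pair of vertices the multiset of labels of edges between them. Its label set:\<close>
definition graph_labels :: "'v set \<Rightarrow> ('v \<Rightarrow> 'v \<Rightarrow> 'l multiset) \<Rightarrow> 'l set" where
  "graph_labels V E = (\<Union>x\<in>V. \<Union>y\<in>V. set_mset (E x y))"

definition lgraph_equiv ::
  "'v set \<Rightarrow> ('v \<Rightarrow> 'v \<Rightarrow> 'l multiset) \<Rightarrow> 'w set \<Rightarrow> ('w \<Rightarrow> 'w \<Rightarrow> 'm multiset) \<Rightarrow> bool" where
  "lgraph_equiv V E V' E' \<longleftrightarrow>
     (\<exists>\<phi> \<psi>. bij_betw \<phi> V V' \<and> bij_betw \<psi> (graph_labels V E) (graph_labels V' E') \<and>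
        (\<forall>x\<in>V. \<forall>y\<in>V. size (E x y) = size (E' (\<phi> x) (\<phi> y)) \<and>
                       E' (\<phi> x) (\<phi> y) = image_mset \<psi> (E x y)))"

definition G2_equiv :: "int \<Rightarrow> int set \<Rightarrow> int set \<Rightarrow> bool" where
  "G2_equiv n F F' = lgraph_equiv (G2_verts n F) int_edges (G2_verts n F') int_edges"

text \<open>Blockwise permutation: position k*n + t (1 \<le> t \<le> n) is moved to k*n + p t.\<close>
definition block_perm :: "int \<Rightarrow> (int \<Rightarrow> int) \<Rightarrow> int set \<Rightarrow> int set" where
  "block_perm n p E = (\<lambda>e. ((e - 1) div n) * n + p ((e - 1) mod n + 1)) ` E"

end

theory Submission
  imports Defs
begin

lemma generic:
  fixes g :: "int \<Rightarrow> int"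
  assumes bg: "bij g" and LF: "(image g) ` Lfam n F = Lfam n F'" and FF: "g ` F = F'"
  shows "lgraph_equiv (G2_verts n F) int_edges (G2_verts n F') int_edges"
proof -
  have ig: "inj g" using bg bij_def by blast
  have injI: "inj (image g)" using ig by (simp add: inj_image_eq_iff inj_def)
  have Iint: "g ` (A \<inter> B) = g ` A \<inter> g ` B" for A B using ig by (simp add: image_Int)
  have eqI: "(g ` A = g ` B) = (A = B)" for A B using ig by (simp add: inj_image_eq_iff)
  have V1: "image g ` V1 n F = V1 n F'"
  proof
    show "image g ` V1 n F \<subseteq> V1 n F'"
      using LF FF Iint unfolding V1_def by fastforce
    show "V1 n F' \<subseteq> image g ` V1 n F"
    proof
      fix A' assume "A' \<in> V1 n F'"
      then have "A' \<in> Lfam n F'" "A' \<inter> F' \<noteq> {}" unfolding V1_def by auto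
      then obtain A where A: "A \<in> Lfam n F" "A' = g ` A" using LF by blast
      then have "A \<inter> F \<noteq> {}" using \<open>A' \<inter> F' \<noteq> {}\<close> FF Iint by auto
      then show "A' \<in> image g ` V1 n F" using A unfolding V1_def by auto
    qed
  qed
  have GV: "image g ` G2_verts n F = G2_verts n F'"
  proof
    show "image g ` G2_verts n F \<subseteq> G2_verts n F'"
    proof
      fix X assume "X \<in> image g ` G2_verts n F"
      then obtain B where B: "B \<in> G2_verts n F" "X = g ` B" by blast
      show "X \<in> G2_verts n F'"
      proof (cases "B \<in> V1 n F")
        case True
        have "X \<in> V1 n F'" using True B(2) V1 by blast
        then show ?thesis unfolding G2_verts_def by (rule UnI1)
      next
        case False
        then obtain A where "B \<in> Lfam n F" "A \<in> V1 n F" "A \<noteq> B" "A \<inter> B \<noteq> {}"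
          using B unfolding G2_verts_def by blast
        note h = this
        have "X \<in> Lfam n F'" using h(1) B(2) LF by blast
        moreover have "g ` A \<in> V1 n F'" using h(2) V1 by blast
        moreover have "g ` A \<noteq> X" using h(3) B(2) eqI by simp
        moreover have "g ` A \<inter> X \<noteq> {}" using h(4) B(2) Iint[of A B] by (metis image_is_empty)
        ultimately show ?thesis unfolding G2_verts_def by blast
      qed
    qed
    show "G2_verts n F' \<subseteq> image g ` G2_verts n F"
    proof
      fix X assume X: "X \<in> G2_verts n F'"
      show "X \<in> image g ` G2_verts n F"
      proof (cases "X \<in> V1 n F'")
        case True
        then obtain A where "A \<in> V1 n F" "X = g ` A" using V1 by blast
        moreover have "A \<in> G2_verts n F" using \<open>A \<in> V1 n F\<close> unfolding G2_verts_def by (rule UnI1)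
        ultimately show ?thesis by blast
      next
        case False
        then obtain A' where h1: "X \<in> Lfam n F'" "A' \<in> V1 n F'" "A' \<noteq> X" "A' \<inter> X \<noteq> {}"
          using X unfolding G2_verts_def by blast
        obtain B where h2: "B \<in> Lfam n F" "X = g ` B" using LF h1(1) by blast
        obtain A where h3: "A \<in> V1 n F" "A' = g ` A" using V1 h1(2) by blast
        have "A \<noteq> B" using h1(3) h2(2) h3(2) by blast
        moreover have "A \<inter> B \<noteq> {}" using h1(4) h2(2) h3(2) Iint[of A B] by (metis image_is_empty)
        ultimately have "B \<in> G2_verts n F" using h2(1) h3(1) unfolding G2_verts_def by blast
        then show ?thesis using \<open>X = g ` B\<close> by blast
      qed
    qed
  qed
  have ED: "int_edges (g ` A) (g ` B) = image_mset g (int_edges A B)" for A B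
    unfolding int_edges_def using eqI Iint
    by (simp add: image_mset_mset_set[OF inj_on_subset[OF ig]])
  have LB: "graph_labels (G2_verts n F') int_edges = g ` graph_labels (G2_verts n F) int_edges"
    unfolding graph_labels_def GV[symmetric] by (auto simp: ED)
  show ?thesis
    unfolding lgraph_equiv_def
  proof (intro exI conjI ballI)
    show "bij_betw (image g) (G2_verts n F) (G2_verts n F')"
      using GV injI by (metis bij_betw_def inj_on_subset subset_UNIV)
    show "bij_betw g (graph_labels (G2_verts n F) int_edges) (graph_labels (G2_verts n F') int_edges)"
      using LB ig by (metis bij_betw_def inj_on_subset subset_UNIV)
  qed (auto simp: ED)
qed


definition bp :: "int \<Rightarrow> (int \<Rightarrow> int) \<Rightarrow> int \<Rightarrow> int" where
  "bp n q e = ((e - 1) div n) * n + q ((e - 1) mod n + 1)"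

lemma bp_shift: "n \<ge> 1 \<Longrightarrow> bp n q (e + i * n) = bp n q e + i * n"
proof -
  assume n: "n \<ge> 1"
  then have n0: "n \<noteq> 0" by simp
  have h: "e + i * n - 1 = (e - 1) + i * n" by simp
  have d: "(e + i * n - 1) div n = (e - 1) div n + i"
    unfolding h using div_mult_self1[OF n0, of "e - 1" i] by simp
  have m: "(e + i * n - 1) mod n = (e - 1) mod n"
    unfolding h by (rule mod_mult_self1)
  show ?thesis unfolding bp_def d m by (simp add: distrib_right)
qed

lemma bp_comp:
  assumes n: "n \<ge> 1" and r: "\<And>t. t \<in> {1..n} \<Longrightarrow> r t \<in> {1..n}"
  shows "bp n q (bp n r e) = bp n (q \<circ> r) e"
proof -
  define k t where "k = (e - 1) div n" and "t = (e - 1) mod n + 1"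
  have n0: "0 < n" using n by simp
  have "(e - 1) mod n < n" "0 \<le> (e - 1) mod n" using n0 by simp_all
  then have t: "t \<in> {1..n}" unfolding t_def by simp
  have rt: "r t - 1 \<ge> 0" "r t - 1 < n" using r[OF t] by auto
  have e: "bp n r e - 1 = (r t - 1) + k * n" unfolding bp_def k_def t_def by simp
  have d: "(bp n r e - 1) div n = k" unfolding e using rt n
    by (simp add: div_pos_pos_trivial)
  have m: "(bp n r e - 1) mod n = r t - 1" unfolding e using rt n
    by (simp add: mod_pos_pos_trivial)
  have r1: "bp n (q \<circ> r) e = k * n + q (r t)" unfolding bp_def k_def t_def by simp
  have "bp n q (bp n r e) = k * n + q (r t - 1 + 1)" unfolding bp_def[of n q] d m by simp
  then show ?thesis using r1 by simp
qed

lemma bp_id: "n \<ge> 1 \<Longrightarrow> bp n id e = e"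
  unfolding bp_def using div_mult_mod_eq[of "e - 1" n] by simp

theorem mainTheorem2:
  fixes n s :: int and E :: "int set"
  assumes "n \<ge> 1" and "s \<ge> 1" and "E \<subseteq> {1..s}" and "E \<noteq> {}"
  shows "G2_equiv n ((\<lambda>e. s + 1 - e) ` E) E \<and>
         (n dvd s \<longrightarrow> (\<forall>p. p permutes {1..n} \<longrightarrow> G2_equiv n (block_perm n p E) E))"
proof
  define g where "g = (\<lambda>e::int. s + 1 - e)"
  have gg: "g (g e) = e" for e unfolding g_def by simp
  have bg: "bij g" by (metis gg bijI' )
  have sh: "image g ` Lfam n (g ` E) = Lfam n E"
  proof -
    have a: "g ` shiftF n (g ` E) i = shiftF n E (- i)" for i
      unfolding shiftF_def image_image by (rule image_cong) (auto simp: gg g_def)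
    have u: "range (uminus::int\<Rightarrow>int) = UNIV" by (metis minus_minus surj_def)
    have "range (\<lambda>i. shiftF n E (- i)) = shiftF n E ` range uminus" by (simp only: image_image)
    then show ?thesis unfolding Lfam_def image_image a u .
  qed
  have "g ` g ` E = E" by (simp add: image_image gg)
  from generic[OF bg sh this] show "G2_equiv n ((\<lambda>e. s + 1 - e) ` E) E"
    unfolding G2_equiv_def g_def .
next
  show "n dvd s \<longrightarrow> (\<forall>p. p permutes {1..n} \<longrightarrow> G2_equiv n (block_perm n p E) E)"
  proof (intro impI allI)
    fix p :: "int \<Rightarrow> int" assume p: "p permutes {1..n}"
    have n: "n \<ge> 1" using assms by simp
    have pr: "t \<in> {1..n} \<Longrightarrow> p t \<in> {1..n}" for t by (simp only: permutes_in_image[OF p])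
    have ip: "inv p permutes {1..n}" using p by (rule permutes_inv)
    have ipr: "t \<in> {1..n} \<Longrightarrow> inv p t \<in> {1..n}" for t by (simp only: permutes_in_image[OF ip])
    have c1: "bp n (inv p) (bp n p e) = e" for e
    proof -
      have "bp n (inv p) (bp n p e) = bp n (inv p \<circ> p) e" by (rule bp_comp[OF n pr])
      also have "inv p \<circ> p = id" by (rule permutes_inv_o(2)[OF p])
      finally show ?thesis by (simp only: bp_id[OF n])
    qed
    have c2: "bp n p (bp n (inv p) e) = e" for e
    proof -
      have "bp n p (bp n (inv p) e) = bp n (p \<circ> inv p) e" by (rule bp_comp[OF n ipr])
      also have "p \<circ> inv p = id" by (rule permutes_inv_o(1)[OF p])
      finally show ?thesis by (simp only: bp_id[OF n])
    qed
    have bg: "bij (bp n (inv p))"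
      by (rule o_bij[of "bp n p"]) (simp_all add: fun_eq_iff c1 c2)
    have BE: "block_perm n p E = bp n p ` E" unfolding block_perm_def bp_def by simp
    have a: "bp n (inv p) ` shiftF n (bp n p ` E) i = shiftF n E i" for i
      unfolding shiftF_def image_image by (rule image_cong) (simp_all only: bp_shift[OF n] c1)
    have sh: "image (bp n (inv p)) ` Lfam n (bp n p ` E) = Lfam n E"
      unfolding Lfam_def image_image a by simp
    have "bp n (inv p) ` bp n p ` E = E" by (simp add: image_image c1)
    from generic[OF bg sh this] show "G2_equiv n (block_perm n p E) E"
      unfolding G2_equiv_def BE .
  qed
qed

end
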